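(* There exists an absolute constant $C>0$ such that the following holds. Let $\mathcal J$ be a joint distribution of $(p_1,p_2,y)\in[0,1]\times[0,1]\times\{0,1\}$, let $\mathcal D_1$ be the distribution of $(p_1,y)$ and $\mathcal D_2$ the distribution of $(p_2,y)$. Then for every positive integer $m$, $$|\mathsf{SCDL}_m(\mathcal D_1)-\mathsf{SCDL}_m(\mathcal D_2)|\le C\,m\,\mathbb E_{\mathcal J}|p_1-p_2|.$$
   Context: For $x\in\mathbb R$ write $x_+=\max\{x,0\}$. For a distribution $\mathcal D$ of $(p,y)\in[0,1]\times\{0,1\}$, a positive integer $m$ and $i\in\{0,\ldots,m\}$, let $w_i(p)=(1-|mp-i|)_+$, $\pi_i=\mathbb E_{\mathcal D}[w_i(p)]$ and $q_i=\mathbb E_{\mathcal D}[w_i(p)y]/\pi_i$ (terms with $\pi_i=0$ are $0$). Define $$\mathsf{SCDL}_m(\mathcal D)=\max_{i=0,\ldots,m}\Big(\sum_{j=0}^{i}\pi_j\big(q_j-\tfrac{i+1}{m}\big)_+ +\sum_{j=i+1}^{m}\pi_j\big(\tfrac im-q_j\big)_+\Big).$$ *)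

theory Defs
  imports "HOL-Probability.Probability"
begin

definition py_space :: "(real \<times> bool) measure" where
  "py_space = borel \<Otimes>\<^sub>M count_space UNIV"

definition ppy_space :: "(real \<times> real \<times> bool) measure" where
  "ppy_space = borel \<Otimes>\<^sub>M (borel \<Otimes>\<^sub>M count_space UNIV)"

definition pos_part :: "real \<Rightarrow> real" where
  "pos_part x = max x 0"

definition wgt :: "nat \<Rightarrow> nat \<Rightarrow> real \<Rightarrow> real" where
  "wgt m i p = pos_part (1 - \<bar>real m * p - real i\<bar>)"

definition pi_w :: "(real \<times> bool) measure \<Rightarrow> nat \<Rightarrow> nat \<Rightarrow> real" where
  "pi_w D m i = (\<integral>z. wgt m i (fst z) \<partial>D)"

definition q_w :: "(real \<times> bool) measure \<Rightarrow> nat \<Rightarrow> nat \<Rightarrow> real" where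
  "q_w D m i = (if pi_w D m i = 0 then 0
     else (\<integral>z. wgt m i (fst z) * (if snd z then 1 else 0) \<partial>D) / pi_w D m i)"

definition SCDL :: "nat \<Rightarrow> (real \<times> bool) measure \<Rightarrow> real" where
  "SCDL m D = Max ((\<lambda>i.
      (\<Sum>j\<in>{0..i}. pi_w D m j * pos_part (q_w D m j - real (i + 1) / real m))
    + (\<Sum>j\<in>{i+1..m}. pi_w D m j * pos_part (real i / real m - q_w D m j))) ` {0..m})"

end

theory Submission
  imports Defs
begin

lemma pos_part_lip: "\<bar>pos_part x - pos_part y\<bar> \<le> \<bar>x - y\<bar>"
  unfolding pos_part_def by linarith

lemma wgt_lip: "\<bar>wgt m j x - wgt m j x'\<bar> \<le> real m * \<bar>x - x'\<bar>"
proof -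
  have "\<bar>wgt m j x - wgt m j x'\<bar> \<le> \<bar>(1 - \<bar>real m * x - real j\<bar>) - (1 - \<bar>real m * x' - real j\<bar>)\<bar>"
    unfolding wgt_def by (rule pos_part_lip)
  also have "\<dots> \<le> \<bar>real m * x - real m * x'\<bar>" by linarith
  also have "\<dots> = real m * \<bar>x - x'\<bar>" by (simp add: abs_mult right_diff_distrib[symmetric])
  finally show ?thesis .
qed

lemma wgt_nonneg: "0 \<le> wgt m j x" unfolding wgt_def pos_part_def by simp
lemma wgt_le1: "wgt m j x \<le> 1" unfolding wgt_def pos_part_def by simp

lemma wgt_zero: assumes "\<not> \<bar>real m * x - real j\<bar> < 1" shows "wgt m j x = 0"
  using assms unfolding wgt_def pos_part_def by simp

lemma wgt_sum_lip:
  "(\<Sum>j\<in>{0..m}. \<bar>wgt m j x - wgt m j x'\<bar>) \<le> 4 * real m * \<bar>x - x'\<bar>"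
proof -
  define u where "u = real m * x"
  define v where "v = real m * x'"
  define A where "A = nat ` {\<lfloor>u\<rfloor>, \<lfloor>u\<rfloor>+1, \<lfloor>v\<rfloor>, \<lfloor>v\<rfloor>+1}"
  have cA: "card A \<le> 4" unfolding A_def
    by (rule order.trans[OF card_image_le]) (auto simp: card_insert_if)
  have fA: "finite A" unfolding A_def by simp
  have z: "\<bar>wgt m j x - wgt m j x'\<bar> = 0" if "j \<notin> A" for j
  proof -
    have "\<not> \<bar>u - real j\<bar> < 1"
    proof
      assume h: "\<bar>u - real j\<bar> < 1"
      have "int j = \<lfloor>u\<rfloor> \<or> int j = \<lfloor>u\<rfloor> + 1"
        using h by linarith
      then have "j \<in> A" unfolding A_def by (auto intro!: image_eqI[where x="int j"])
      with that show False by simp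
    qed
    moreover have "\<not> \<bar>v - real j\<bar> < 1"
    proof
      assume h: "\<bar>v - real j\<bar> < 1"
      have "int j = \<lfloor>v\<rfloor> \<or> int j = \<lfloor>v\<rfloor> + 1"
        using h by linarith
      then have "j \<in> A" unfolding A_def by (auto intro!: image_eqI[where x="int j"])
      with that show False by simp
    qed
    ultimately show ?thesis using wgt_zero u_def v_def by simp
  qed
  have "(\<Sum>j\<in>{0..m}. \<bar>wgt m j x - wgt m j x'\<bar>) = (\<Sum>j\<in>{0..m} \<inter> A. \<bar>wgt m j x - wgt m j x'\<bar>)"
    by (rule sum.mono_neutral_right) (auto simp: z)
  also have "\<dots> \<le> (\<Sum>j\<in>{0..m} \<inter> A. real m * \<bar>x - x'\<bar>)"
    by (rule sum_mono) (rule wgt_lip)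
  also have "\<dots> = real (card ({0..m} \<inter> A)) * (real m * \<bar>x - x'\<bar>)" by simp
  also have "\<dots> \<le> 4 * (real m * \<bar>x - x'\<bar>)"
  proof (rule mult_right_mono)
    have "card ({0..m} \<inter> A) \<le> card A" using fA by (simp add: card_mono)
    then show "real (card ({0..m} \<inter> A)) \<le> 4" using cA by linarith
  qed simp
  finally show ?thesis by simp
qed

lemma key_pos: assumes "0 \<le> A" "A \<le> P"
  shows "P * pos_part ((if P = 0 then 0 else A / P) - c) = pos_part (A - c * P)"
    and "P * pos_part (c - (if P = 0 then 0 else A / P)) = pos_part (c * P - A)"
proof -
  show "P * pos_part ((if P = 0 then 0 else A / P) - c) = pos_part (A - c * P)"
  proof (cases "P = 0")
    case True then show ?thesis using assms by (simp add: pos_part_def)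
  next
    case False then have "P > 0" using assms by simp
    then show ?thesis unfolding pos_part_def
      by (simp add: max_def field_simps)
  qed
  show "P * pos_part (c - (if P = 0 then 0 else A / P)) = pos_part (c * P - A)"
  proof (cases "P = 0")
    case True then show ?thesis using assms by (simp add: pos_part_def)
  next
    case False then have "P > 0" using assms by simp
    then show ?thesis unfolding pos_part_def
      by (simp add: max_def field_simps)
  qed
qed

lemma Max_lip:
  fixes f g :: "nat \<Rightarrow> real"
  assumes "finite S" "S \<noteq> {}" "\<And>i. i \<in> S \<Longrightarrow> \<bar>f i - g i\<bar> \<le> B"
  shows "\<bar>Max (f ` S) - Max (g ` S)\<bar> \<le> B"
proof -
  have a: "Max (f ` S) \<le> Max (g ` S) + B" if "\<And>i. i \<in> S \<Longrightarrow> \<bar>f i - g i\<bar> \<le> B" for f g :: "nat \<Rightarrow> real"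
  proof -
    obtain i where i: "i \<in> S" "Max (f ` S) = f i"
    proof -
      have "Max (f ` S) \<in> f ` S" using assms(1,2) by (intro Max_in) auto
      then show ?thesis using that by auto
    qed
    have "g i \<le> Max (g ` S)" using i assms(1) by simp
    then show ?thesis using i that[OF i(1)] by linarith
  qed
  have "Max (f ` S) \<le> Max (g ` S) + B" by (rule a) (rule assms(3))
  moreover have "Max (g ` S) \<le> Max (f ` S) + B" by (rule a) (simp add: abs_minus_commute assms(3))
  ultimately show ?thesis by linarith
qed

definition Tf :: "nat \<Rightarrow> (nat \<Rightarrow> real) \<Rightarrow> (nat \<Rightarrow> real) \<Rightarrow> nat \<Rightarrow> real" where
  "Tf m P A i = (\<Sum>j\<in>{0..i}. pos_part (A j - real (i + 1) / real m * P j))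
    + (\<Sum>j\<in>{i+1..m}. pos_part (real i / real m * P j - A j))"

lemma sum_abs_diff: "\<bar>sum f S - sum g S\<bar> \<le> (\<Sum>j\<in>S. \<bar>f j - g j\<bar>)" for f g :: "nat \<Rightarrow> real"
  by (metis (no_types) sum_abs sum_subtractf)

lemma Tf_diff:
  assumes "i \<le> m" "m > 0"
  shows "\<bar>Tf m P1 A1 i - Tf m P2 A2 i\<bar> \<le> (\<Sum>j\<in>{0..m}. 2 * (\<bar>P1 j - P2 j\<bar> + \<bar>A1 j - A2 j\<bar>))"
proof -
  let ?B = "\<lambda>j. 2 * (\<bar>P1 j - P2 j\<bar> + \<bar>A1 j - A2 j\<bar>)"
  have c1: "0 \<le> real (i + 1) / real m" "real (i + 1) / real m \<le> 2"
    using assms by (auto simp: field_simps)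
  have c2: "0 \<le> real i / real m" "real i / real m \<le> 2"
    using assms by (auto simp: field_simps)
  have gen: "\<bar>pos_part (x1 - c * y1) - pos_part (x2 - c * y2)\<bar> \<le> 2 * (\<bar>y1 - y2\<bar> + \<bar>x1 - x2\<bar>)"
    if "0 \<le> c" "c \<le> 2" for x1 x2 y1 y2 c :: real
  proof -
    have "\<bar>pos_part (x1 - c * y1) - pos_part (x2 - c * y2)\<bar> \<le> \<bar>(x1 - c*y1) - (x2 - c*y2)\<bar>" (is "?lhs \<le> _")
      by (rule pos_part_lip)
    also have "\<dots> \<le> \<bar>x1 - x2\<bar> + \<bar>c * (y1 - y2)\<bar>" by (simp add: algebra_simps)
    finally have h: "?lhs \<le> \<bar>x1 - x2\<bar> + \<bar>c * (y1 - y2)\<bar>" .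
    have "\<bar>c * (y1 - y2)\<bar> \<le> 2 * \<bar>y1 - y2\<bar>" using that
      by (simp add: abs_mult mult_right_mono)
    then show ?thesis using h abs_ge_zero[of "x1 - x2"] by (smt (verit))
  qed
  have gen2: "\<bar>pos_part (c * y1 - x1) - pos_part (c * y2 - x2)\<bar> \<le> 2 * (\<bar>y1 - y2\<bar> + \<bar>x1 - x2\<bar>)"
    if "0 \<le> c" "c \<le> 2" for x1 x2 y1 y2 c :: real
  proof -
    have "\<bar>pos_part (c * y1 - x1) - pos_part (c * y2 - x2)\<bar> \<le> \<bar>(c*y1 - x1) - (c*y2 - x2)\<bar>" (is "?lhs \<le> _")
      by (rule pos_part_lip)
    also have "\<dots> \<le> \<bar>x1 - x2\<bar> + \<bar>c * (y1 - y2)\<bar>" by (simp add: algebra_simps)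
    finally have h: "?lhs \<le> \<bar>x1 - x2\<bar> + \<bar>c * (y1 - y2)\<bar>" .
    have "\<bar>c * (y1 - y2)\<bar> \<le> 2 * \<bar>y1 - y2\<bar>" using that
      by (simp add: abs_mult mult_right_mono)
    then show ?thesis using h abs_ge_zero[of "x1 - x2"] by (smt (verit))
  qed
  have s1: "\<bar>(\<Sum>j\<in>{0..i}. pos_part (A1 j - real (i + 1) / real m * P1 j))
      - (\<Sum>j\<in>{0..i}. pos_part (A2 j - real (i + 1) / real m * P2 j))\<bar> \<le> (\<Sum>j\<in>{0..i}. ?B j)"
    by (rule order.trans[OF sum_abs_diff], rule sum_mono, rule gen[OF c1])
  have s2: "\<bar>(\<Sum>j\<in>{i+1..m}. pos_part (real i / real m * P1 j - A1 j))
      - (\<Sum>j\<in>{i+1..m}. pos_part (real i / real m * P2 j - A2 j))\<bar> \<le> (\<Sum>j\<in>{i+1..m}. ?B j)"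
    by (rule order.trans[OF sum_abs_diff], rule sum_mono, rule gen2[OF c2])
  have split: "(\<Sum>j\<in>{0..m}. ?B j) = (\<Sum>j\<in>{0..i}. ?B j) + (\<Sum>j\<in>{i+1..m}. ?B j)"
  proof -
    have "{0..m} = {0..i} \<union> {i+1..m}" using assms by auto
    then show ?thesis by (simp add: sum.union_disjoint)
  qed
  show ?thesis unfolding Tf_def split using s1 s2 by linarith
qed

definition aw :: "(real \<times> bool) measure \<Rightarrow> nat \<Rightarrow> nat \<Rightarrow> real" where
  "aw D m i = (\<integral>z. wgt m i (fst z) * (if snd z then 1 else 0) \<partial>D)"

lemma SCDL_alt:
  assumes "\<And>j. 0 \<le> aw D m j \<and> aw D m j \<le> pi_w D m j"
  shows "SCDL m D = Max (Tf m (pi_w D m) (aw D m) ` {0..m})"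
proof -
  have q: "q_w D m j = (if pi_w D m j = 0 then 0 else aw D m j / pi_w D m j)" for j
    unfolding q_w_def aw_def by simp
  show ?thesis unfolding SCDL_def Tf_def q
    using key_pos[OF conjunct1[OF assms] conjunct2[OF assms]]
    by simp
qed

lemma wgt_meas[measurable]: "wgt m j \<in> borel_measurable borel"
  unfolding wgt_def pos_part_def by measurable

lemma main_J:
  fixes J :: "(real \<times> real \<times> bool) measure" and m :: nat
  assumes PS: "prob_space J" and SJ: "sets J = sets ppy_space"
    and AE01: "AE z in J. fst z \<in> {0..1} \<and> fst (snd z) \<in> {0..1}" and mpos: "m > 0"
  shows "\<bar>SCDL m (distr J py_space (\<lambda>(p1, p2, y). (p1, y)))
          - SCDL m (distr J py_space (\<lambda>(p1, p2, y). (p2, y)))\<bar>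
         \<le> 16 * real m * (\<integral>z. \<bar>fst z - fst (snd z)\<bar> \<partial>J)"
proof -
  interpret prob_space J by (rule PS)
  have MJ: "measurable J N = measurable ppy_space N" for N :: "'b measure"
    by (rule measurable_cong_sets[OF SJ refl])
  define Y :: "real \<times> real \<times> bool \<Rightarrow> real" where "Y z = (if snd (snd z) then 1 else 0)" for z
  define g1 :: "real \<times> real \<times> bool \<Rightarrow> real \<times> bool" where "g1 = (\<lambda>(p1, p2, y). (p1, y))"
  define g2 :: "real \<times> real \<times> bool \<Rightarrow> real \<times> bool" where "g2 = (\<lambda>(p1, p2, y). (p2, y))"
  have g1m: "g1 \<in> measurable J py_space" unfolding MJ g1_def ppy_space_def py_space_def
    by measurable
  have g2m: "g2 \<in> measurable J py_space" unfolding MJ g2_def ppy_space_def py_space_def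
    by measurable
  have f1m: "(\<lambda>z. wgt m j (fst z)) \<in> borel_measurable py_space" for j
    unfolding py_space_def by measurable
  have f2m: "(\<lambda>z. wgt m j (fst z) * (if snd z then 1 else 0)) \<in> borel_measurable py_space" for j
    unfolding py_space_def by measurable
  have P1m: "(\<lambda>z. wgt m j (fst z)) \<in> borel_measurable J" for j
    unfolding MJ ppy_space_def by measurable
  have P2m: "(\<lambda>z. wgt m j (fst (snd z))) \<in> borel_measurable J" for j
    unfolding MJ ppy_space_def by measurable
  have Ym: "Y \<in> borel_measurable J"
    unfolding MJ ppy_space_def Y_def by measurable
  have Dm: "(\<lambda>z. \<bar>fst z - fst (snd z)\<bar>) \<in> borel_measurable J"
    unfolding MJ ppy_space_def by measurable
  have Y01: "0 \<le> Y z" "Y z \<le> 1" for z unfolding Y_def by auto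
  have bnd: "integrable J f" if "f \<in> borel_measurable J" "\<And>z. \<bar>f z\<bar> \<le> B" for f :: "real \<times> real \<times> bool \<Rightarrow> real" and B :: real
    by (rule integrable_const_bound[where B=B]) (use that in auto)
  have i1: "integrable J (\<lambda>z. wgt m j (fst z))" for j
    by (rule bnd[of _ 1]) (use P1m wgt_nonneg wgt_le1 in auto)
  have i2: "integrable J (\<lambda>z. wgt m j (fst (snd z)))" for j
    by (rule bnd[of _ 1]) (use P2m wgt_nonneg wgt_le1 in auto)
  have i1Y: "integrable J (\<lambda>z. wgt m j (fst z) * Y z)" for j
    by (rule bnd[of _ 1]) (use P1m Ym in simp, simp add: abs_mult Y01 wgt_nonneg wgt_le1 mult_le_one)
  have i2Y: "integrable J (\<lambda>z. wgt m j (fst (snd z)) * Y z)" for j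
    by (rule bnd[of _ 1]) (use P2m Ym in simp, simp add: abs_mult Y01 wgt_nonneg wgt_le1 mult_le_one)
  have iD: "integrable J (\<lambda>z. \<bar>fst z - fst (snd z)\<bar>)"
  proof (rule integrable_const_bound[where B=1])
    show "AE z in J. norm \<bar>fst z - fst (snd z)\<bar> \<le> 1"
      using AE01 by (rule eventually_mono) auto
  qed (rule Dm)
  define D1 where "D1 = distr J py_space g1"
  define D2 where "D2 = distr J py_space g2"
  have pi1: "pi_w D1 m j = (\<integral>z. wgt m j (fst z) \<partial>J)" for j
    unfolding pi_w_def D1_def by (simp add: integral_distr[OF g1m f1m]) (simp add: g1_def case_prod_beta)
  have pi2: "pi_w D2 m j = (\<integral>z. wgt m j (fst (snd z)) \<partial>J)" for j
    unfolding pi_w_def D2_def by (simp add: integral_distr[OF g2m f1m]) (simp add: g2_def case_prod_beta)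
  have a1: "aw D1 m j = (\<integral>z. wgt m j (fst z) * Y z \<partial>J)" for j
    unfolding aw_def D1_def by (simp add: integral_distr[OF g1m f2m]) (simp add: g1_def Y_def case_prod_beta)
  have a2: "aw D2 m j = (\<integral>z. wgt m j (fst (snd z)) * Y z \<partial>J)" for j
    unfolding aw_def D2_def by (simp add: integral_distr[OF g2m f2m]) (simp add: g2_def Y_def case_prod_beta)
  have c1: "0 \<le> aw D1 m j \<and> aw D1 m j \<le> pi_w D1 m j" for j
    unfolding a1 pi1
    by (intro conjI Bochner_Integration.integral_nonneg Bochner_Integration.integral_mono i1 i1Y)
      (auto simp: Y01 wgt_nonneg wgt_le1 mult_le_one mult_left_le)
  have c2: "0 \<le> aw D2 m j \<and> aw D2 m j \<le> pi_w D2 m j" for j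
    unfolding a2 pi2
    by (intro conjI Bochner_Integration.integral_nonneg Bochner_Integration.integral_mono i2 i2Y)
      (auto simp: Y01 wgt_nonneg wgt_le1 mult_le_one mult_left_le)
  have absb: "\<bar>integral\<^sup>L J f\<bar> \<le> integral\<^sup>L J g"
    if "integrable J f" "integrable J g" "\<And>z. \<bar>f z\<bar> \<le> g z" for f g :: "real \<times> real \<times> bool \<Rightarrow> real"
    by (rule order.trans[OF integral_abs_bound Bochner_Integration.integral_mono[OF integrable_abs]])
       (use that in auto)
  let ?E = "\<lambda>j z. \<bar>wgt m j (fst z) - wgt m j (fst (snd z))\<bar>"
  have iE: "integrable J (?E j)" for j using i1 i2 by auto
  have dp: "\<bar>pi_w D1 m j - pi_w D2 m j\<bar> \<le> (\<integral>z. ?E j z \<partial>J)" for j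
    unfolding pi1 pi2 Bochner_Integration.integral_diff[OF i1 i2, symmetric]
    by (rule absb) (use i1 i2 iE in auto)
  have da: "\<bar>aw D1 m j - aw D2 m j\<bar> \<le> (\<integral>z. ?E j z \<partial>J)" for j
    unfolding a1 a2 Bochner_Integration.integral_diff[OF i1Y i2Y, symmetric]
  proof (rule absb)
    show "\<bar>wgt m j (fst z) * Y z - wgt m j (fst (snd z)) * Y z\<bar> \<le> ?E j z" for z
    proof -
      have "\<bar>wgt m j (fst z) * Y z - wgt m j (fst (snd z)) * Y z\<bar> = ?E j z * \<bar>Y z\<bar>"
        by (simp add: left_diff_distrib[symmetric] abs_mult)
      also have "\<dots> \<le> ?E j z" using Y01[of z] by (simp add: mult_left_le)
      finally show ?thesis .
    qed
  qed (use i1Y i2Y iE in auto)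
  have step1: "\<bar>SCDL m D1 - SCDL m D2\<bar>
      \<le> (\<Sum>j\<in>{0..m}. 2 * (\<bar>pi_w D1 m j - pi_w D2 m j\<bar> + \<bar>aw D1 m j - aw D2 m j\<bar>))"
    unfolding SCDL_alt[OF c1] SCDL_alt[OF c2]
    by (rule Max_lip) (simp, simp, rule Tf_diff, use mpos in auto)
  also have "\<dots> \<le> (\<Sum>j\<in>{0..m}. 4 * (\<integral>z. ?E j z \<partial>J))"
    by (rule sum_mono) (use dp da in \<open>smt (verit)\<close>)
  also have "\<dots> = 4 * (\<integral>z. (\<Sum>j\<in>{0..m}. ?E j z) \<partial>J)"
    by (simp add: Bochner_Integration.integral_sum[OF iE] sum_distrib_left)
  also have "\<dots> \<le> 4 * (\<integral>z. 4 * real m * \<bar>fst z - fst (snd z)\<bar> \<partial>J)"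
    by (intro mult_left_mono Bochner_Integration.integral_mono) (use iE iD wgt_sum_lip in auto)
  also have "\<dots> = 16 * real m * (\<integral>z. \<bar>fst z - fst (snd z)\<bar> \<partial>J)"
    by simp
  finally show ?thesis unfolding D1_def D2_def g1_def g2_def .
qed

theorem lemma5p2:
  shows "\<exists>C::real. C > 0 \<and>
    (\<forall>(J :: (real \<times> real \<times> bool) measure) (m :: nat).
       prob_space J \<longrightarrow> sets J = sets ppy_space \<longrightarrow>
       (AE z in J. fst z \<in> {0..1} \<and> fst (snd z) \<in> {0..1}) \<longrightarrow>
       m > 0 \<longrightarrow>
       \<bar>SCDL m (distr J py_space (\<lambda>(p1, p2, y). (p1, y)))
          - SCDL m (distr J py_space (\<lambda>(p1, p2, y). (p2, y)))\<bar>
         \<le> C * real m * (\<integral>z. \<bar>fst z - fst (snd z)\<bar> \<partial>J))"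
proof (intro exI[where x=16] conjI allI impI)
  fix J :: "(real \<times> real \<times> bool) measure" and m :: nat
  assume "prob_space J" "sets J = sets ppy_space"
    "AE z in J. fst z \<in> {0..1} \<and> fst (snd z) \<in> {0..1}" "m > 0"
  then show "\<bar>SCDL m (distr J py_space (\<lambda>(p1, p2, y). (p1, y)))
          - SCDL m (distr J py_space (\<lambda>(p1, p2, y). (p2, y)))\<bar>
         \<le> 16 * real m * (\<integral>z. \<bar>fst z - fst (snd z)\<bar> \<partial>J)"
    by (rule main_J)
qed simp

end
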